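(* Let $C$ be a real $n\times n$ matrix with nonnegative entries. Then there exist real $n\times n$ matrices $A$ and $B$ with $A$ having nonnegative entries such that $C=AB-BA$ if and only if $\operatorname{tr}(C)=0$.
   Context: Real $n\times n$ matrices are ordered entrywise; a matrix is positive ($\geq 0$) if all its entries are nonnegative. $\operatorname{tr}$ denotes the trace. *)

theory Defs
  imports "HOL-Analysis.Analysis"
begin

end

theory Submission
  imports Defs
begin

theorem proposition4p3:
  fixes C :: "real^'n^'n"
  assumes "\<forall>i j. C $ i $ j \<ge> 0"
  shows "(\<exists>A B :: real^'n^'n. (\<forall>i j. A $ i $ j \<ge> 0) \<and> C = A ** B - B ** A)
         \<longleftrightarrow> trace C = 0"
proof
  assume "\<exists>A B :: real^'n^'n. (\<forall>i j. A $ i $ j \<ge> 0) \<and> C = A ** B - B ** A"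
  then obtain A B :: "real^'n^'n" where "C = A ** B - B ** A" by blast
  then show "trace C = 0" by (simp only: trace_sub trace_mul_sym[of A B] diff_self)
next
  assume tr: "trace C = 0"
  have diag: "C $ i $ i = 0" for i
  proof -
    have "(\<Sum>k\<in>UNIV. C $ k $ k) = 0" using tr by (simp add: trace_def)
    then have "\<forall>k\<in>UNIV. C $ k $ k = 0"
      using sum_nonneg_eq_0_iff[of UNIV "\<lambda>k. C $ k $ k"] assms by simp
    then show ?thesis by simp
  qed
  obtain f :: "'n \<Rightarrow> nat" where inj: "inj f"
    using finite_imp_inj_to_nat_seg[of "UNIV :: 'n set"] by auto
  define d where "d i = real (f i)" for i
  have dne: "i \<noteq> j \<Longrightarrow> d i \<noteq> d j" for i j
    using inj by (simp add: d_def inj_eq)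
  define A :: "real^'n^'n" where "A = (\<chi> i j. if i = j then d i else 0)"
  define B :: "real^'n^'n" where "B = (\<chi> i j. if i = j then 0 else C $ i $ j / (d i - d j))"
  have AB: "(A ** B) $ i $ j = d i * B $ i $ j" for i j
  proof -
    have "(A ** B) $ i $ j = (\<Sum>k\<in>UNIV. A $ i $ k * B $ k $ j)" by (simp add: matrix_matrix_mult_def)
    also have "\<dots> = (\<Sum>k\<in>UNIV. if k = i then d i * B $ i $ j else 0)"
      by (rule sum.cong) (auto simp: A_def)
    finally show ?thesis by simp
  qed
  have BA: "(B ** A) $ i $ j = B $ i $ j * d j" for i j
  proof -
    have "(B ** A) $ i $ j = (\<Sum>k\<in>UNIV. B $ i $ k * A $ k $ j)" by (simp add: matrix_matrix_mult_def)
    also have "\<dots> = (\<Sum>k\<in>UNIV. if k = j then B $ i $ j * d j else 0)"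
      by (rule sum.cong) (auto simp: A_def)
    finally show ?thesis by simp
  qed
  have "C = A ** B - B ** A"
  proof (rule vec_eq_iff[THEN iffD2], intro allI, rule vec_eq_iff[THEN iffD2], intro allI)
    fix i j
    show "C $ i $ j = (A ** B - B ** A) $ i $ j"
    proof (cases "i = j")
      case True
      have "(A ** B - B ** A) $ i $ j = d i * B $ i $ j - B $ i $ j * d j"
        by (simp only: vector_minus_component AB BA)
      also have "\<dots> = 0" using True by (simp add: B_def)
      finally show ?thesis using True diag by simp
    next
      case False
      then have "d i - d j \<noteq> 0" using dne by simp
      have "(A ** B - B ** A) $ i $ j = d i * B $ i $ j - B $ i $ j * d j"
        by (simp only: vector_minus_component AB BA)
      also have "\<dots> = (d i - d j) * (C $ i $ j / (d i - d j))"
        using False by (simp only: B_def vec_lambda_beta if_False left_diff_distrib mult.commute)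
      also have "\<dots> = C $ i $ j" using \<open>d i - d j \<noteq> 0\<close> by simp
      finally show ?thesis by simp
    qed
  qed
  moreover have "\<forall>i j. A $ i $ j \<ge> 0" by (simp add: A_def d_def)
  ultimately show "\<exists>A B :: real^'n^'n. (\<forall>i j. A $ i $ j \<ge> 0) \<and> C = A ** B - B ** A" by blast
qed

end
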